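(* Let $A,B\in\mathscr{B}(\Omega)$ with $\underline{P}(B)>0$ and $\underline{P}(B^c)>0$, and let $\mathcal{B}=\{B,B^c\}$. If $\mathcal{B}$ dilates $A$ under the Geometric rule, then it contracts $A$ under Dempster's rule. Similarly, if $\mathcal{B}$ dilates $A$ under Dempster's rule, then it contracts $A$ under the Geometric rule. In both cases, the contraction is strict if the corresponding dilation is strict.
   Context: $\Omega$ is a separable, completely metrizable space with Borel $\sigma$-algebra $\mathscr{B}(\Omega)$; $\underline{P}$ is a Choquet capacity of order 2 on $\mathscr{B}(\Omega)$ (a coherent lower probability with weakly compact set of dominating measures satisfying $\underline{P}(A\cup B)\ge\underline{P}(A)+\underline{P}(B)-\underline{P}(A\cap B)$ for all $A,B$); $\Pi=\{P:P\ge\underline{P}\}$, $\underline{P}(A)=\inf_{P\in\Pi}P(A)$, $\overline{P}(A)=\sup_{P\in\Pi}P(A)=1-\underline{P}(A^c)$. Dempster's rule: $\overline{P}_{\mathfrak{D}}(A\mid Z)=\overline{P}(A\cap Z)/\overline{P}(Z)$, $\underline{P}_{\mathfrak{D}}(A\mid Z)=1-\overline{P}_{\mathfrak{D}}(A^c\mid Z)$. Geometric rule: $\underline{P}_{\mathfrak{G}}(A\mid Z)=\underline{P}(A\cap Z)/\underline{P}(Z)$, $\overline{P}_{\mathfrak{G}}(A\mid Z)=1-\underline{P}_{\mathfrak{G}}(A^c\mid Z)$. For a rule with conditional lower/upper probabilities $\underline{P}_\bullet,\overline{P}_\bullet$: $\mathcal{B}$ strictly dilates $A$ if $\sup_{Z\in\mathcal{B}}\underline{P}_\bullet(A\mid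 Z)<\underline{P}(A)\le\overline{P}(A)<\inf_{Z\in\mathcal{B}}\overline{P}_\bullet(A\mid Z)$, and dilates $A$ if this holds with either (but not both) outer strict inequality allowed to be an equality; $\mathcal{B}$ strictly contracts $A$ if $\underline{P}(A)<\inf_{Z\in\mathcal{B}}\underline{P}_\bullet(A\mid Z)\le\sup_{Z\in\mathcal{B}}\overline{P}_\bullet(A\mid Z)<\overline{P}(A)$, and contracts $A$ if this holds with either (but not both) outer strict inequality allowed to be an equality. *)

theory Defs
  imports "HOL-Probability.Probability"
begin

definition weak_conv_measures :: "(nat \<Rightarrow> 'a::topological_space measure) \<Rightarrow> 'a measure \<Rightarrow> bool" where
  "weak_conv_measures Ms M \<longleftrightarrow>
     (\<forall>f :: 'a \<Rightarrow> real. continuous_on UNIV f \<and> bounded (range f) \<longrightarrow>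
        (\<lambda>n. integral\<^sup>L (Ms n) f) \<longlonglongrightarrow> integral\<^sup>L M f)"

text \<open>Weak compactness of a set of Borel probability measures. On a Polish space the weak
  topology on probability measures is metrizable, so compactness is sequential compactness.\<close>
definition weakly_seq_compact_measures :: "'a::topological_space measure set \<Rightarrow> bool" where
  "weakly_seq_compact_measures S \<longleftrightarrow>
     (\<forall>Ms. (\<forall>n. Ms n \<in> S) \<longrightarrow>
        (\<exists>(r::nat \<Rightarrow> nat) M. strict_mono r \<and> M \<in> S \<and> weak_conv_measures (Ms \<circ> r) M))"

definition credal_set :: "('a::topological_space set \<Rightarrow> real) \<Rightarrow> 'a measure set" where
  "credal_set lowP = {M. prob_space M \<and> sets M = sets borel \<and>
                         (\<forall>A \<in> sets borel. lowP A \<le> measure M A)}"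

definition upP :: "('a set \<Rightarrow> real) \<Rightarrow> 'a set \<Rightarrow> real" where
  "upP lowP A = 1 - lowP (- A)"

definition choquet2 :: "('a::topological_space set \<Rightarrow> real) \<Rightarrow> bool" where
  "choquet2 lowP \<longleftrightarrow>
     credal_set lowP \<noteq> {} \<and>
     weakly_seq_compact_measures (credal_set lowP) \<and>
     (\<forall>A \<in> sets borel. lowP A = (INF M \<in> credal_set lowP. measure M A)) \<and>
     (\<forall>A \<in> sets borel. \<forall>B \<in> sets borel.
        lowP (A \<union> B) \<ge> lowP A + lowP B - lowP (A \<inter> B))"

definition upD :: "('a set \<Rightarrow> real) \<Rightarrow> 'a set \<Rightarrow> 'a set \<Rightarrow> real" where
  "upD lowP A Z = upP lowP (A \<inter> Z) / upP lowP Z"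

definition lowD :: "('a set \<Rightarrow> real) \<Rightarrow> 'a set \<Rightarrow> 'a set \<Rightarrow> real" where
  "lowD lowP A Z = 1 - upD lowP (- A) Z"

definition lowG :: "('a set \<Rightarrow> real) \<Rightarrow> 'a set \<Rightarrow> 'a set \<Rightarrow> real" where
  "lowG lowP A Z = lowP (A \<inter> Z) / lowP Z"

definition upG :: "('a set \<Rightarrow> real) \<Rightarrow> 'a set \<Rightarrow> 'a set \<Rightarrow> real" where
  "upG lowP A Z = 1 - lowG lowP (- A) Z"

text \<open>A rule is given by its conditional lower and upper probabilities lowC, upC
  (as functions of the event A and the conditioning event Z).\<close>

definition strictly_dilates ::
  "('a set \<Rightarrow> real) \<Rightarrow> ('a set \<Rightarrow> 'a set \<Rightarrow> real) \<Rightarrow> ('a set \<Rightarrow> 'a set \<Rightarrow> real)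
   \<Rightarrow> 'a set set \<Rightarrow> 'a set \<Rightarrow> bool" where
  "strictly_dilates lowP lowC upC \<B> A \<longleftrightarrow>
     (SUP Z \<in> \<B>. lowC A Z) < lowP A \<and> lowP A \<le> upP lowP A \<and> upP lowP A < (INF Z \<in> \<B>. upC A Z)"

definition dilates ::
  "('a set \<Rightarrow> real) \<Rightarrow> ('a set \<Rightarrow> 'a set \<Rightarrow> real) \<Rightarrow> ('a set \<Rightarrow> 'a set \<Rightarrow> real)
   \<Rightarrow> 'a set set \<Rightarrow> 'a set \<Rightarrow> bool" where
  "dilates lowP lowC upC \<B> A \<longleftrightarrow>
     lowP A \<le> upP lowP A \<and>
     (((SUP Z \<in> \<B>. lowC A Z) < lowP A \<and> upP lowP A \<le> (INF Z \<in> \<B>. upC A Z)) \<or>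
      ((SUP Z \<in> \<B>. lowC A Z) \<le> lowP A \<and> upP lowP A < (INF Z \<in> \<B>. upC A Z)))"

definition strictly_contracts ::
  "('a set \<Rightarrow> real) \<Rightarrow> ('a set \<Rightarrow> 'a set \<Rightarrow> real) \<Rightarrow> ('a set \<Rightarrow> 'a set \<Rightarrow> real)
   \<Rightarrow> 'a set set \<Rightarrow> 'a set \<Rightarrow> bool" where
  "strictly_contracts lowP lowC upC \<B> A \<longleftrightarrow>
     lowP A < (INF Z \<in> \<B>. lowC A Z) \<and> (INF Z \<in> \<B>. lowC A Z) \<le> (SUP Z \<in> \<B>. upC A Z) \<and>
     (SUP Z \<in> \<B>. upC A Z) < upP lowP A"

definition contracts ::
  "('a set \<Rightarrow> real) \<Rightarrow> ('a set \<Rightarrow> 'a set \<Rightarrow> real) \<Rightarrow> ('a set \<Rightarrow> 'a set \<Rightarrow> real)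
   \<Rightarrow> 'a set set \<Rightarrow> 'a set \<Rightarrow> bool" where
  "contracts lowP lowC upC \<B> A \<longleftrightarrow>
     (INF Z \<in> \<B>. lowC A Z) \<le> (SUP Z \<in> \<B>. upC A Z) \<and>
     ((lowP A < (INF Z \<in> \<B>. lowC A Z) \<and> (SUP Z \<in> \<B>. upC A Z) \<le> upP lowP A) \<or>
      (lowP A \<le> (INF Z \<in> \<B>. lowC A Z) \<and> (SUP Z \<in> \<B>. upC A Z) < upP lowP A))"

end

theory Submission
  imports Defs
begin

lemma basic_facts:
  fixes lowP :: "'a::topological_space set \<Rightarrow> real"
  assumes "choquet2 lowP"
  shows "lowP {} = 0" "lowP UNIV = 1"
    "\<And>X Y. X \<in> sets borel \<Longrightarrow> Y \<in> sets borel \<Longrightarrow> lowP (X \<union> Y) \<ge> lowP X + lowP Y - lowP (X \<inter> Y)"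
proof -
  have ne: "credal_set lowP \<noteq> {}" and inf: "\<forall>A \<in> sets borel. lowP A = (INF M \<in> credal_set lowP. measure M A)"
    using assms unfolding choquet2_def by auto
  have "lowP {} = (INF M \<in> credal_set lowP. measure M {})" using inf by auto
  also have "\<dots> = (INF M \<in> credal_set lowP. 0)" by simp
  also have "\<dots> = 0" using ne by simp
  finally show "lowP {} = 0" .
  have "lowP UNIV = (INF M \<in> credal_set lowP. measure M UNIV)" using inf by auto
  also have "\<dots> = (INF M \<in> credal_set lowP. 1)"
  proof (rule INF_cong[OF refl])
    fix M assume "M \<in> credal_set lowP"
    then have ps: "prob_space M" and s: "sets M = sets borel" unfolding credal_set_def by auto
    have "space M = UNIV" using sets_eq_imp_space_eq[OF s] by simp
    then show "measure M UNIV = 1" using prob_space.prob_space[OF ps] by simp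
  qed
  also have "\<dots> = 1" using ne by simp
  finally show "lowP UNIV = 1" .
  show "\<And>X Y. X \<in> sets borel \<Longrightarrow> Y \<in> sets borel \<Longrightarrow> lowP (X \<union> Y) \<ge> lowP X + lowP Y - lowP (X \<inter> Y)"
    using assms unfolding choquet2_def by auto
qed

lemma core:
  fixes lowP :: "'a::topological_space set \<Rightarrow> real"
  assumes "choquet2 lowP" and X: "X \<in> sets borel" and Z: "Z \<in> sets borel"
    and p1: "lowP Z > 0" and p2: "lowP (- Z) > 0"
  shows "upG lowP X (- Z) \<ge> upP lowP X \<Longrightarrow> upD lowP X Z \<le> upP lowP X"
    and "upG lowP X (- Z) > upP lowP X \<Longrightarrow> upD lowP X Z < upP lowP X"
    and "upD lowP X Z \<ge> lowD lowP X Z"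
    and "upG lowP X Z \<ge> lowG lowP X Z"
proof -
  note bf = basic_facts[OF assms(1)]
  have cX: "- X \<in> sets borel" and cZ: "- Z \<in> sets borel" using X Z by auto
  have sm: "lowP (- X \<union> - Z) \<ge> lowP (- X) + lowP (- Z) - lowP (- X \<inter> - Z)"
    using bf(3)[OF cX cZ] .
  have "lowP (Z \<union> - Z) \<ge> lowP Z + lowP (- Z) - lowP (Z \<inter> - Z)" using bf(3)[OF Z cZ] .
  then have zz: "lowP Z + lowP (- Z) \<le> 1" using bf(1,2) by simp
  have uZ: "upP lowP Z > 0" unfolding upP_def using zz p1 by linarith
  define x where "x = lowP (- X)"
  define y where "y = lowP (- Z)"
  define w where "w = lowP (- X \<inter> - Z)"
  have e1: "upG lowP X (- Z) = 1 - w / y" unfolding upG_def lowG_def w_def y_def by simp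
  have e2: "upD lowP X Z = (1 - lowP (- X \<union> - Z)) / (1 - y)" unfolding upD_def upP_def y_def by simp
  have e3: "upP lowP X = 1 - x" unfolding upP_def x_def by simp
  have y0: "y > 0" "1 - y > 0" using p2 uZ unfolding y_def upP_def by auto
  have le: "1 - lowP (- X \<union> - Z) \<le> (1 - x) * (1 - y) - (x*y - w)"
    using sm unfolding x_def y_def w_def by (simp add: algebra_simps)
  show "upG lowP X (- Z) \<ge> upP lowP X \<Longrightarrow> upD lowP X Z \<le> upP lowP X"
  proof -
    assume "upG lowP X (- Z) \<ge> upP lowP X"
    then have "1 - w / y \<ge> 1 - x" using e1 e3 by simp
    then have "w / y \<le> x" by simp
    then have "w \<le> x * y" using y0 by (simp add: divide_le_eq)
    then have "1 - lowP (- X \<union> - Z) \<le> (1 - x) * (1 - y)" using le by linarith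
    then show ?thesis using e2 e3 y0 by (simp add: divide_le_eq)
  qed
  show "upG lowP X (- Z) > upP lowP X \<Longrightarrow> upD lowP X Z < upP lowP X"
  proof -
    assume "upG lowP X (- Z) > upP lowP X"
    then have "1 - w / y > 1 - x" using e1 e3 by simp
    then have "w / y < x" by simp
    then have "w < x * y" using y0 by (simp add: divide_less_eq)
    then have "1 - lowP (- X \<union> - Z) < (1 - x) * (1 - y)" using le by linarith
    then show ?thesis using e2 e3 y0 by (simp add: divide_less_eq)
  qed
  have XZ: "X \<inter> Z \<in> sets borel" and cXZ: "- X \<inter> Z \<in> sets borel" using X Z cX by auto
  have s2: "lowP (X \<inter> Z \<union> - X \<inter> Z) \<ge> lowP (X \<inter> Z) + lowP (- X \<inter> Z) - lowP ((X \<inter> Z) \<inter> (- X \<inter> Z))"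
    using bf(3)[OF XZ cXZ] .
  have "X \<inter> Z \<union> - X \<inter> Z = Z" by auto
  moreover have "(X \<inter> Z) \<inter> (- X \<inter> Z) = {}" by auto
  ultimately have s2': "lowP (X \<inter> Z) + lowP (- X \<inter> Z) \<le> lowP Z" using s2 bf(1) by simp
  show "upG lowP X Z \<ge> lowG lowP X Z"
  proof -
    have "lowP (X \<inter> Z) / lowP Z + lowP (- X \<inter> Z) / lowP Z \<le> 1"
      using s2' p1 by (simp add: add_divide_distrib[symmetric] divide_le_eq)
    then show ?thesis unfolding upG_def lowG_def by simp
  qed
  have cXcZ: "X \<union> - Z \<in> sets borel" and cX2: "- X \<union> - Z \<in> sets borel" using X Z by auto
  have s3: "lowP ((X \<union> - Z) \<union> (- X \<union> - Z)) \<ge> lowP (X \<union> - Z) + lowP (- X \<union> - Z) - lowP ((X \<union> - Z) \<inter> (- X \<union> - Z))"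
    using bf(3)[OF cXcZ cX2] .
  have "(X \<union> - Z) \<union> (- X \<union> - Z) = UNIV" by auto
  moreover have "(X \<union> - Z) \<inter> (- X \<union> - Z) = - Z" by auto
  ultimately have s3': "lowP (X \<union> - Z) + lowP (- X \<union> - Z) \<le> 1 + lowP (- Z)" using s3 bf(2) by simp
  show "upD lowP X Z \<ge> lowD lowP X Z"
  proof -
    have a: "- (X \<inter> Z) = - X \<union> - Z" and b: "- (- X \<inter> Z) = X \<union> - Z" by auto
    have "(1 - lowP (X \<union> - Z)) + (1 - lowP (- X \<union> - Z)) \<ge> 1 - lowP (- Z)" using s3' by linarith
    then have "(1 - lowP (X \<union> - Z)) / (1 - lowP (- Z)) + (1 - lowP (- X \<union> - Z)) / (1 - lowP (- Z)) \<ge> 1"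
      using y0 unfolding y_def by (simp add: add_divide_distrib[symmetric] le_divide_eq)
    then show ?thesis unfolding lowD_def upD_def upP_def a b by simp
  qed
qed

lemma real_combo:
  fixes l u gl1 gl2 gu1 gu2 dl1 dl2 du1 du2 :: real
  assumes h1: "gu2 \<ge> u \<Longrightarrow> du1 \<le> u" and h2: "gu2 > u \<Longrightarrow> du1 < u"
    and h3: "gu1 \<ge> u \<Longrightarrow> du2 \<le> u" and h4: "gu1 > u \<Longrightarrow> du2 < u"
    and h5: "gl2 \<le> l \<Longrightarrow> dl1 \<ge> l" and h6: "gl2 < l \<Longrightarrow> dl1 > l"
    and h7: "gl1 \<le> l \<Longrightarrow> dl2 \<ge> l" and h8: "gl1 < l \<Longrightarrow> dl2 > l"
    and o1: "dl1 \<le> du1" and o2: "dl2 \<le> du2" and o3: "gl1 \<le> gu1" and o4: "gl2 \<le> gu2"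
  shows "(l \<le> u \<and> ((max gl1 gl2 < l \<and> u \<le> min gu1 gu2) \<or> (max gl1 gl2 \<le> l \<and> u < min gu1 gu2))
           \<longrightarrow> min dl1 dl2 \<le> max du1 du2 \<and> ((l < min dl1 dl2 \<and> max du1 du2 \<le> u) \<or> (l \<le> min dl1 dl2 \<and> max du1 du2 < u)))
    \<and> ((max gl1 gl2 < l \<and> l \<le> u \<and> u < min gu1 gu2) \<longrightarrow> (l < min dl1 dl2 \<and> min dl1 dl2 \<le> max du1 du2 \<and> max du1 du2 < u))
    \<and> (l \<le> u \<and> ((max dl1 dl2 < l \<and> u \<le> min du1 du2) \<or> (max dl1 dl2 \<le> l \<and> u < min du1 du2))
           \<longrightarrow> min gl1 gl2 \<le> max gu1 gu2 \<and> ((l < min gl1 gl2 \<and> max gu1 gu2 \<le> u) \<or> (l \<le> min gl1 gl2 \<and> max gu1 gu2 < u)))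
    \<and> ((max dl1 dl2 < l \<and> l \<le> u \<and> u < min du1 du2) \<longrightarrow> (l < min gl1 gl2 \<and> min gl1 gl2 \<le> max gu1 gu2 \<and> max gu1 gu2 < u))"
proof (intro conjI impI)
  show "min dl1 dl2 \<le> max du1 du2" using o1 by linarith
  show "min dl1 dl2 \<le> max du1 du2" using o1 by linarith
  show "min gl1 gl2 \<le> max gu1 gu2" using o3 by linarith
  show "min gl1 gl2 \<le> max gu1 gu2" using o3 by linarith
next
  assume H: "l \<le> u \<and> ((max gl1 gl2 < l \<and> u \<le> min gu1 gu2) \<or> (max gl1 gl2 \<le> l \<and> u < min gu1 gu2))"
  show "(l < min dl1 dl2 \<and> max du1 du2 \<le> u) \<or> (l \<le> min dl1 dl2 \<and> max du1 du2 < u)"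
  proof (cases "max gl1 gl2 < l \<and> u \<le> min gu1 gu2")
    case True then show ?thesis using h1 h3 h6 h8 by (simp add: min_def max_def split: if_splits)
  next
    case False then have "max gl1 gl2 \<le> l \<and> u < min gu1 gu2" using H by blast
    then show ?thesis using h2 h4 h5 h7 by (simp add: min_def max_def split: if_splits)
  qed
next
  assume "max gl1 gl2 < l \<and> l \<le> u \<and> u < min gu1 gu2"
  then show "l < min dl1 dl2" "max du1 du2 < u" using h2 h4 h6 h8 by (simp_all add: min_def max_def split: if_splits)
next
  assume H: "l \<le> u \<and> ((max dl1 dl2 < l \<and> u \<le> min du1 du2) \<or> (max dl1 dl2 \<le> l \<and> u < min du1 du2))"
  show "(l < min gl1 gl2 \<and> max gu1 gu2 \<le> u) \<or> (l \<le> min gl1 gl2 \<and> max gu1 gu2 < u)"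
  proof (cases "max dl1 dl2 < l \<and> u \<le> min du1 du2")
    case True
    have "l < gl1" using h7 True by (cases "gl1 \<le> l") (auto simp: max_def split: if_splits)
    moreover have "l < gl2" using h5 True by (cases "gl2 \<le> l") (auto simp: max_def split: if_splits)
    moreover have "gu1 \<le> u" using h4 True by (cases "gu1 > u") (auto simp: min_def split: if_splits)
    moreover have "gu2 \<le> u" using h2 True by (cases "gu2 > u") (auto simp: min_def split: if_splits)
    ultimately show ?thesis by simp
  next
    case False then have T: "max dl1 dl2 \<le> l \<and> u < min du1 du2" using H by blast
    have "l \<le> gl1" using h8 T by (cases "gl1 < l") (auto simp: max_def split: if_splits)
    moreover have "l \<le> gl2" using h6 T by (cases "gl2 < l") (auto simp: max_def split: if_splits)
    moreover have "gu1 < u" using h3 T by (cases "gu1 \<ge> u") (auto simp: min_def split: if_splits)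
    moreover have "gu2 < u" using h1 T by (cases "gu2 \<ge> u") (auto simp: min_def split: if_splits)
    ultimately show ?thesis by simp
  qed
next
  assume T: "max dl1 dl2 < l \<and> l \<le> u \<and> u < min du1 du2"
  have "l < gl1" using h7 T by (cases "gl1 \<le> l") (auto simp: max_def split: if_splits)
  moreover have "l < gl2" using h5 T by (cases "gl2 \<le> l") (auto simp: max_def split: if_splits)
  ultimately show "l < min gl1 gl2" by simp
  have "gu1 < u" using h3 T by (cases "gu1 \<ge> u") (auto simp: min_def split: if_splits)
  moreover have "gu2 < u" using h1 T by (cases "gu2 \<ge> u") (auto simp: min_def split: if_splits)
  ultimately show "max gu1 gu2 < u" by simp
qed

theorem theorem5p9:
  fixes lowP :: "'a::polish_space set \<Rightarrow> real" and A B :: "'a set"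
  assumes "choquet2 lowP"
    and "A \<in> sets borel" and "B \<in> sets borel"
    and "lowP B > 0" and "lowP (- B) > 0"
  shows "(dilates lowP (lowG lowP) (upG lowP) {B, - B} A
            \<longrightarrow> contracts lowP (lowD lowP) (upD lowP) {B, - B} A)
       \<and> (strictly_dilates lowP (lowG lowP) (upG lowP) {B, - B} A
            \<longrightarrow> strictly_contracts lowP (lowD lowP) (upD lowP) {B, - B} A)
       \<and> (dilates lowP (lowD lowP) (upD lowP) {B, - B} A
            \<longrightarrow> contracts lowP (lowG lowP) (upG lowP) {B, - B} A)
       \<and> (strictly_dilates lowP (lowD lowP) (upD lowP) {B, - B} A
            \<longrightarrow> strictly_contracts lowP (lowG lowP) (upG lowP) {B, - B} A)"
proof -
  have cA: "- A \<in> sets borel" and cB: "- B \<in> sets borel" using assms by auto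
  have pB: "lowP (- (- B)) > 0" using assms by simp
  note cA1 = core[OF assms(1) assms(2) assms(3) assms(4) assms(5)]
  note cA2 = core[OF assms(1) assms(2) cB assms(5) pB, simplified]
  note cN1 = core[OF assms(1) cA assms(3) assms(4) assms(5)]
  note cN2 = core[OF assms(1) cA cB assms(5) pB, simplified]
  have uA: "upP lowP (- A) = 1 - lowP A" unfolding upP_def by simp
  have lD: "\<And>Z. lowD lowP A Z = 1 - upD lowP (- A) Z" unfolding lowD_def by simp
  have uG: "\<And>Z. upG lowP (- A) Z = 1 - lowG lowP A Z" unfolding upG_def by simp
  have sup2: "\<And>f :: 'a set \<Rightarrow> real. (SUP Z\<in>{B, - B}. f Z) = max (f B) (f (- B))"
    by (simp add: cSup_insert sup_max)
  have inf2: "\<And>f :: 'a set \<Rightarrow> real. (INF Z\<in>{B, - B}. f Z) = min (f B) (f (- B))"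
    by (simp add: cInf_insert inf_min)
  show ?thesis
    unfolding dilates_def strictly_dilates_def contracts_def strictly_contracts_def sup2 inf2
    apply (rule real_combo)
    using cA1 cA2 cN1 cN2 unfolding uA lD uG by auto
qed

end
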